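(* For every integer $d\ge2$ with $d \notin \{2\} \cup 4\mathbb N$, we have $J_d/d \in \mathsf O_{d,2} \setminus \mathsf O_{d,1}$, where $J_d$ is the $d\times d$ all-ones matrix.
   Context: For integers $d\ge2$, $s\ge1$ and $U\in M_{ds}(\mathbb C)$ viewed as a $d\times d$ block matrix with blocks $U_{ij}\in M_s(\mathbb C)$, set $\phi_{d,s}(U)=\big(\tfrac1s\|U_{ij}\|_F^2\big)_{i,j=1}^d$ with $\|X\|_F=\operatorname{Tr}(XX^* )^{1/2}$. Define $\mathsf O_{d,s}:=\phi_{d,s}(\mathcal O(ds))$, where $\mathcal O(n)$ is the group of $n\times n$ real orthogonal matrices. $4\mathbb N$ denotes the positive multiples of $4$. *)

theory Defs
  imports Main Complex_Main
begin

text \<open>Matrices of size varying with a natural number are represented as functions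
  nat \<Rightarrow> nat \<Rightarrow> real, indices 0-based; only entries with indices below the size matter.
  A d\<times>d matrix is normalized to be 0 outside its index range.\<close>

definition real_orthogonal :: "nat \<Rightarrow> (nat \<Rightarrow> nat \<Rightarrow> real) \<Rightarrow> bool" where
  "real_orthogonal n U \<longleftrightarrow>
     (\<forall>i<n. \<forall>j<n. (\<Sum>k<n. U i k * U j k) = (if i = j then 1 else 0))"

definition phi :: "nat \<Rightarrow> nat \<Rightarrow> (nat \<Rightarrow> nat \<Rightarrow> real) \<Rightarrow> (nat \<Rightarrow> nat \<Rightarrow> real)" where
  "phi d s U = (\<lambda>i j. if i < d \<and> j < d then
      (1 / real s) * (\<Sum>a<s. \<Sum>b<s. (U (i * s + a) (j * s + b))^2) else 0)"

definition O_set :: "nat \<Rightarrow> nat \<Rightarrow> (nat \<Rightarrow> nat \<Rightarrow> real) set" where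
  "O_set d s = phi d s ` {U. real_orthogonal (d * s) U}"

definition all_ones_over_d :: "nat \<Rightarrow> (nat \<Rightarrow> nat \<Rightarrow> real)" where
  "all_ones_over_d d = (\<lambda>i j. if i < d \<and> j < d then 1 / real d else 0)"

end

theory Submission
  imports Defs
begin

lemma roots_sum:
  assumes "i < d" "i' < d" "i \<noteq> i'"
  shows "(\<Sum>j<d. cis (2*pi*(real i - real i')*real j/real d)) = 0"
proof -
  define w where "w = cis (2*pi*(real i - real i')/real d)"
  have d0: "d > 0" using assms by simp
  have w1: "w \<noteq> 1"
  proof
    assume "w = 1"
    then have "cos (2*pi*(real i - real i')/real d) = 1" by (simp add: w_def complex_eq_iff)
    then obtain m :: int where m: "2*pi*(real i - real i')/real d = real_of_int m * 2 * pi"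
      by (subst (asm) cos_one_2pi_int) blast
    hence "pi * (2*(real i - real i')) = pi * (2*(real_of_int m * real d))"
      using d0 by (simp add: field_simps)
    hence "real i - real i' = real_of_int m * real d" by simp
    hence "real_of_int (int i - int i') = real_of_int (m * int d)"
      by simp
    hence *: "int i - int i' = m * int d" by (simp only: of_int_eq_iff)
    hence "\<bar>m\<bar> * int d = \<bar>int i - int i'\<bar>" by (simp add: abs_mult)
    also have "\<dots> < int d" using assms by linarith
    finally have "\<bar>m\<bar> < 1" using d0 by (simp add: mult_less_cancel_right2)
    hence "m = 0" by simp
    with * assms show False by simp
  qed
  have wn: "w ^ d = 1"
  proof -
    have "w ^ d = cis (real d * (2*pi*(real i - real i')/real d))"
      by (simp add: w_def DeMoivre)
    also have "real d * (2*pi*(real i - real i')/real d) = 2*pi*real_of_int (int i - int i')"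
      using d0 by simp
    also have "cis (2*pi*real_of_int (int i - int i')) = 1" by (rule cis_multiple_2pi) simp
    finally show ?thesis .
  qed
  have "(\<Sum>j<d. cis (2*pi*(real i - real i')*real j/real d)) = (\<Sum>j<d. w ^ j)"
    by (intro sum.cong refl) (simp add: w_def DeMoivre field_simps)
  also have "\<dots> = 0" using w1 wn by (simp add: sum_gp_strict)
  finally show ?thesis .
qed

lemma cos_sum:
  assumes "i < d" "i' < d" "i \<noteq> i'"
  shows "(\<Sum>j<d. cos (2*pi*(real i - real i')*real j/real d)) = 0"
    and "(\<Sum>j<d. sin (2*pi*(real i - real i')*real j/real d)) = 0"
proof -
  have "Re (\<Sum>j<d. cis (2*pi*(real i - real i')*real j/real d)) = 0"
       "Im (\<Sum>j<d. cis (2*pi*(real i - real i')*real j/real d)) = 0"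
    using roots_sum[OF assms] by simp_all
  then show "(\<Sum>j<d. cos (2*pi*(real i - real i')*real j/real d)) = 0"
    "(\<Sum>j<d. sin (2*pi*(real i - real i')*real j/real d)) = 0"
    by (simp_all add: Re_sum Im_sum)
qed

lemma sum_split2: "(\<Sum>l<(d::nat)*2. f l) = (\<Sum>j<d. f (j*2) + f (j*2+1))"
  by (induction d) (simp_all add: numeral_2_eq_2 add.assoc)

definition blk :: "nat \<Rightarrow> nat \<Rightarrow> real \<Rightarrow> real" where
  "blk a b x = (if a = b then cos x else if a = 0 then - sin x else sin x)"

definition Uf :: "nat \<Rightarrow> nat \<Rightarrow> nat \<Rightarrow> real" where
  "Uf d k l = blk (k mod 2) (l mod 2) (2*pi*real (k div 2)*real (l div 2)/real d) / sqrt (real d)"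

lemma blk_inner:
  assumes "a < 2" "a' < 2"
  shows "blk a 0 x * blk a' 0 y + blk a 1 x * blk a' 1 y =
     (if a = a' then cos (x - y) else if a = 0 then - sin (x - y) else sin (x - y))"
proof -
  have "a = 0 \<or> a = 1" "a' = 0 \<or> a' = 1" using assms by auto
  then show ?thesis by (auto simp: blk_def cos_diff sin_diff)
qed

lemma Uf_orth:
  assumes "k < d*2" "k' < d*2"
  shows "(\<Sum>l<d*2. Uf d k l * Uf d k' l) = (if k = k' then 1 else 0)"
proof -
  define i where "i = k div 2"
  define i' where "i' = k' div 2"
  define a where "a = k mod 2"
  define a' where "a' = k' mod 2"
  have i: "i < d" "i' < d" using assms by (auto simp: i_def i'_def)
  have a: "a < 2" "a' < 2" by (auto simp: a_def a'_def)
  have d0: "d > 0" using assms by simp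
  have kk: "(k = k') \<longleftrightarrow> (i = i' \<and> a = a')"
    unfolding i_def i'_def a_def a'_def by (metis div_mult_mod_eq)
  define c where "c = (\<lambda>j::nat. 2*pi*(real i - real i')*real j/real d)"
  define g where "g = (\<lambda>x::real. if a = a' then cos x else if a = 0 then - sin x else sin x)"
  have "(\<Sum>l<d*2. Uf d k l * Uf d k' l) = (\<Sum>j<d. Uf d k (j*2) * Uf d k' (j*2) + Uf d k (j*2+1) * Uf d k' (j*2+1))"
    by (rule sum_split2)
  also have "\<dots> = (\<Sum>j<d. g (c j) / real d)"
  proof (intro sum.cong refl)
    fix j assume "j \<in> {..<d}"
    have m1: "Suc (j*2) mod 2 = 1" and d1: "Suc (j*2) div 2 = j" by presburger+
    have sq: "sqrt (real d) * sqrt (real d) = real d" using d0 by simp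
    have "Uf d k (j*2) * Uf d k' (j*2) + Uf d k (j*2+1) * Uf d k' (j*2+1) =
      (blk a 0 (2*pi*real i*real j/real d) * blk a' 0 (2*pi*real i'*real j/real d) +
       blk a 1 (2*pi*real i*real j/real d) * blk a' 1 (2*pi*real i'*real j/real d)) / real d"
      unfolding Uf_def i_def i'_def a_def a'_def using sq
      by (simp add: add_divide_distrib m1 d1 del: mod_mult_self3 div_mult_self3)
    also have "\<dots> = g (2*pi*real i*real j/real d - 2*pi*real i'*real j/real d) / real d"
      using blk_inner[OF a] by (simp add: g_def)
    also have "2*pi*real i*real j/real d - 2*pi*real i'*real j/real d = c j"
      by (simp add: c_def diff_divide_distrib algebra_simps)
    finally show "Uf d k (j*2) * Uf d k' (j*2) + Uf d k (j*2+1) * Uf d k' (j*2+1) = g (c j) / real d" .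
  qed
  also have "\<dots> = (\<Sum>j<d. g (c j)) / real d" by (simp add: sum_divide_distrib)
  also have "\<dots> = (if k = k' then 1 else 0)"
  proof (cases "i = i'")
    case True
    then have "\<And>j. c j = 0" by (simp add: c_def)
    then show ?thesis using True kk d0 by (simp add: g_def)
  next
    case False
    have "(\<Sum>j<d. g (c j)) = 0"
      using cos_sum[OF i False] by (cases "a = a'"; cases "a = 0") (simp_all add: g_def c_def sum_negf)
    then show ?thesis using False kk by simp
  qed
  finally show ?thesis .
qed

lemma Uf_sq:
  assumes "a < 2" "b < 2" "d > 0"
  shows "(Uf d (i*2+a) (j*2+b))^2 = (blk a b (2*pi*real i*real j/real d))^2 / real d"
proof -
  have "(i*2+a) div 2 = i" "(i*2+a) mod 2 = a" "(j*2+b) div 2 = j" "(j*2+b) mod 2 = b"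
    using assms by auto
  then show ?thesis using assms by (simp add: Uf_def power_divide)
qed

lemma phi_Uf: "d > 0 \<Longrightarrow> phi d 2 (Uf d) = all_ones_over_d d"
proof (rule ext, rule ext)
  fix i j assume d0: "d > 0"
  show "phi d 2 (Uf d) i j = all_ones_over_d d i j"
  proof (cases "i < d \<and> j < d")
    case True
    define x where "x = 2*pi*real i*real j/real d"
    have "(\<Sum>a<2. \<Sum>b<2. (Uf d (i*2+a) (j*2+b))^2) = (\<Sum>a<2. \<Sum>b<2. (blk a b x)^2 / real d)"
      using Uf_sq[OF _ _ d0] by (simp add: x_def)
    have sc: "sin x * sin x + cos x * cos x = 1" by (metis sin_cos_squared_add3 add.commute)
    have "(\<Sum>a<2. \<Sum>b<2. (Uf d (i*2+a) (j*2+b))^2) = (\<Sum>a<2. \<Sum>b<2. (blk a b x)^2 / real d)"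
      using Uf_sq[OF _ _ d0] by (simp add: x_def)
    also have "\<dots> = 2 / real d" using sc
      by (simp add: numeral_2_eq_2 blk_def add_divide_distrib[symmetric])
    finally show ?thesis using True by (simp add: phi_def all_ones_over_d_def)
  qed (auto simp: phi_def all_ones_over_d_def)
qed

lemma no_hadamard:
  assumes d3: "d \<ge> 3" and orth: "real_orthogonal d U" and sq: "\<And>i j. i < d \<Longrightarrow> j < d \<Longrightarrow> (U i j)^2 = 1 / real d"
  shows "4 dvd d"
proof -
  define D where "D = real d"
  have D0: "D > 0" using d3 by (simp add: D_def)
  define x where "x = (\<lambda>k. D * U 0 k * U 1 k)"
  define y where "y = (\<lambda>k. D * U 0 k * U 2 k)"
  have o01: "(\<Sum>k<d. U 0 k * U 1 k) = 0" and o02: "(\<Sum>k<d. U 0 k * U 2 k) = 0"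
    and o12: "(\<Sum>k<d. U 1 k * U 2 k) = 0"
    using orth d3 unfolding real_orthogonal_def by auto
  have pm: "x k = 1 \<or> x k = -1" "y k = 1 \<or> y k = -1" if "k < d" for k
  proof -
    have "(x k)^2 = D^2 * (U 0 k)^2 * (U 1 k)^2" by (simp add: x_def power_mult_distrib)
    also have "\<dots> = 1" using sq[of 0 k] sq[of 1 k] that d3 D0 by (simp add: D_def power2_eq_square)
    finally show "x k = 1 \<or> x k = -1" by (simp add: power2_eq_1_iff)
    have "(y k)^2 = D^2 * (U 0 k)^2 * (U 2 k)^2" by (simp add: y_def power_mult_distrib)
    also have "\<dots> = 1" using sq[of 0 k] sq[of 2 k] that d3 D0 by (simp add: D_def power2_eq_square)
    finally show "y k = 1 \<or> y k = -1" by (simp add: power2_eq_1_iff)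
  qed
  have sx: "(\<Sum>k<d. x k) = 0" using o01 by (simp add: x_def sum_distrib_left[symmetric] mult.assoc)
  have sy: "(\<Sum>k<d. y k) = 0" using o02 by (simp add: y_def sum_distrib_left[symmetric] mult.assoc)
  have sxy: "(\<Sum>k<d. x k * y k) = 0"
  proof -
    have "(\<Sum>k<d. x k * y k) = (\<Sum>k<d. D * (U 1 k * U 2 k))"
    proof (intro sum.cong refl)
      fix k assume "k \<in> {..<d}"
      then have "(U 0 k)^2 = 1 / D" using sq[of 0 k] d3 by (simp add: D_def)
      then show "x k * y k = D * (U 1 k * U 2 k)" using D0
        by (simp add: x_def y_def power2_eq_square field_simps)
    qed
    also have "\<dots> = 0" using o12 by (simp add: sum_distrib_left[symmetric])
    finally show ?thesis .
  qed
  have "(\<Sum>k<d. (1 + x k) * (1 + y k)) = D"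
    using sx sy sxy by (simp add: algebra_simps sum.distrib D_def)
  moreover have "(\<Sum>k<d. (1 + x k) * (1 + y k)) = (\<Sum>k<d. if x k = 1 \<and> y k = 1 then 4 else 0)"
  proof (intro sum.cong refl)
    fix k assume "k \<in> {..<d}"
    then show "(1 + x k) * (1 + y k) = (if x k = 1 \<and> y k = 1 then 4 else 0)"
      using pm[of k] by auto
  qed
  moreover have "(\<Sum>k<d. if x k = 1 \<and> y k = 1 then 4 else (0::real)) = real (card {k\<in>{..<d}. x k = 1 \<and> y k = 1} * 4)"
    by (simp add: sum.inter_filter[symmetric])
  ultimately have "real d = real (card {k\<in>{..<d}. x k = 1 \<and> y k = 1} * 4)" by (simp add: D_def)
  then have "d = card {k\<in>{..<d}. x k = 1 \<and> y k = 1} * 4" by (simp only: of_nat_eq_iff)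
  then show ?thesis by (metis dvd_triv_right)
qed

theorem corollary4p3:
  fixes d :: nat
  assumes "d \<ge> 2" and "d \<noteq> 2" and "\<not> (4 dvd d)"
  shows "all_ones_over_d d \<in> O_set d 2 - O_set d 1"
proof
  have d0: "d > 0" using assms by simp
  have "real_orthogonal (d*2) (Uf d)" unfolding real_orthogonal_def using Uf_orth by simp
  then show "all_ones_over_d d \<in> O_set d 2"
    unfolding O_set_def using phi_Uf[OF d0] by (metis (mono_tags) image_eqI mem_Collect_eq)
next
  show "all_ones_over_d d \<notin> O_set d 1"
  proof
    assume "all_ones_over_d d \<in> O_set d 1"
    then obtain U where U: "real_orthogonal d U" and e: "all_ones_over_d d = phi d 1 U"
      unfolding O_set_def by auto
    have "(U i j)^2 = 1 / real d" if "i < d" "j < d" for i j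
      using fun_cong[OF fun_cong[OF e, of i], of j] that by (simp add: phi_def all_ones_over_d_def)
    then have "4 dvd d" using no_hadamard[OF _ U] assms by simp
    with assms show False by simp
  qed
qed

end
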